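(* Let $m\ge2$, $C=C_{2m}(1,1)=J_{2m}+E_{m-1,m+1}-E_{m,m+2}$, $P_m(x)=U_m(x)-U_{m-1}(x)-U_{m-2}(x)$, and let $\lambda_m$ be the largest root of $P_m$. Then $\lambda_m$ is the largest eigenvalue of each of $H_C(0)=\operatorname{Re}C$, $H_C(-\pi/4)=\operatorname{Re}(e^{i\pi/4}C)$ and $H_C(-\pi/2)=\operatorname{Re}(iC)$, and corresponding eigenvectors $v_0, v_{\pi/4}, v_{\pi/2}\in\mathbb{C}^{2m}$ (for $H_C(0)$, $H_C(-\pi/4)$, $H_C(-\pi/2)$ respectively) are given as follows, writing $U_r=U_r(\lambda_m)$: (i) $v_0(k)=U_{k-1}$ for $1\le k\le m-1$; $v_0(k)=\frac12U_{m-1}$ for $k=m,m+1$; $v_0(k)=0$ for $m+2\le k\le2m$. (ii) With $\eta=e^{-i\pi/4}$, $\alpha=\frac1{1+\eta}$, $q=\frac{1-\bar\eta}{1+\eta}=(\sqrt2-1)e^{-i\pi/4}$: $v_{\pi/4}(k)=\eta^{k-1}U_{k-1}$ for $1\le k\le m-1$; $v_{\pi/4}(k)=\eta^{k-1}\alpha U_{m-1}$ for $k=m,m+1$; $v_{\pi/4}(k)=\eta^{k-1}qU_{2m-k}$ for $m+2\le k\le2m$. (iii) With $\beta=\frac{1+i}{2}$: $v_{\pi/2}(k)=(-i)^{k-1}U_{k-1}$ for $1\le k\le m-1$; $v_{\pi/2}(k)=(-i)^{k-1}\beta U_{m-1}$ for $k=m,m+1$; $v_{\pi/2}(k)=(-i)^{k-1}U_{2m-k}$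 for $m+2\le k\le2m$.
   Context: $J_n$ is the $n\times n$ nilpotent Jordan block (ones on the first superdiagonal); $E_{a,b}$ is the matrix unit with $1$ in position $(a,b)$. $H_X(\theta)=\frac12(e^{-i\theta}X+e^{i\theta}X^* )$ and $\operatorname{Re}Y=\frac12(Y+Y^* )$. $U_k$ are Chebyshev polynomials of the second kind: $U_{-1}=0$, $U_0=1$, $U_{k+1}(u)=2uU_k(u)-U_{k-1}(u)$. *)

theory Defs
  imports Complex_Main "Jordan_Normal_Form.Matrix" "Jordan_Normal_Form.Char_Poly"
begin

fun chebU :: "nat \<Rightarrow> real \<Rightarrow> real" where
  "chebU 0 u = 1"
| "chebU (Suc 0) u = 2 * u"
| "chebU (Suc (Suc k)) u = 2 * u * chebU (Suc k) u - chebU k u"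

definition P_poly :: "nat \<Rightarrow> real \<Rightarrow> real" where
  "P_poly m x = chebU m x - chebU (m - 1) x - chebU (m - 2) x"

definition J_mat :: "nat \<Rightarrow> complex mat" where
  "J_mat n = mat n n (\<lambda>(i, j). if j = i + 1 then 1 else 0)"

text \<open>Matrix unit E_(a,b) of size n, with 1-based indices a, b.\<close>
definition E_unit :: "nat \<Rightarrow> nat \<Rightarrow> nat \<Rightarrow> complex mat" where
  "E_unit n a b = mat n n (\<lambda>(i, j). if i + 1 = a \<and> j + 1 = b then 1 else 0)"

definition C_mat :: "nat \<Rightarrow> complex mat" where
  "C_mat m = J_mat (2*m) + E_unit (2*m) (m - 1) (m + 1) - E_unit (2*m) m (m + 2)"

definition ctrans :: "complex mat \<Rightarrow> complex mat" where
  "ctrans X = mat (dim_col X) (dim_row X) (\<lambda>(i, j). cnj (X $$ (j, i)))"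

definition H_mat :: "complex mat \<Rightarrow> real \<Rightarrow> complex mat" where
  "H_mat X \<theta> = (1/2 :: complex) \<cdot>\<^sub>m
     (exp (- \<i> * complex_of_real \<theta>) \<cdot>\<^sub>m X + exp (\<i> * complex_of_real \<theta>) \<cdot>\<^sub>m ctrans X)"

text \<open>Vector of length n from a 1-indexed coordinate function.\<close>
definition vec1 :: "nat \<Rightarrow> (nat \<Rightarrow> complex) \<Rightarrow> complex vec" where
  "vec1 n f = vec n (\<lambda>i. f (i + 1))"

definition largest_eigenvalue :: "complex mat \<Rightarrow> complex \<Rightarrow> bool" where
  "largest_eigenvalue H \<mu> \<longleftrightarrow> eigenvalue H \<mu> \<and>
     (\<forall>\<nu>. eigenvalue H \<nu> \<longrightarrow> \<nu> \<in> \<real> \<and> Re \<nu> \<le> Re \<mu>)"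

end

theory Submission
  imports Defs
begin


lemma chebU_rec: "chebU (Suc (Suc k)) u = 2 * u * chebU (Suc k) u - chebU k u" by simp

lemma chebU_ge1: "u \<ge> 1 \<Longrightarrow> chebU k u \<ge> 1 \<and> chebU (Suc k) u \<ge> chebU k u"
proof (induction k)
  case 0 then show ?case by simp
next
  case (Suc k)
  then have "chebU (Suc (Suc k)) u - chebU (Suc k) u = (2*u - 1) * chebU (Suc k) u - chebU k u" by (simp add: algebra_simps)
  moreover have "(2*u - 1) * chebU (Suc k) u \<ge> chebU (Suc k) u"
    using Suc by (simp add: mult_right_mono[of 1 "2*u-1" "chebU (Suc k) u", simplified])
  ultimately show ?case using Suc by linarith
qed

lemma chebU_pos: "u \<ge> 1 \<Longrightarrow> chebU k u > 0"
  using chebU_ge1[of u k] by linarith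

lemma tail:
  fixes r :: "nat \<Rightarrow> real" and lam :: real
  assumes "lam \<ge> 1"
  shows "lam * (\<Sum>i\<le>j. (r i)\<^sup>2) - (\<Sum>i<j. r i * r (Suc i))
          \<ge> chebU (Suc j) lam / (2 * chebU j lam) * (r j)\<^sup>2"
proof (induction j)
  case 0 then show ?case using chebU_pos[OF assms, of 0] by simp
next
  case (Suc j)
  define p where "p = chebU (Suc j) lam / (2 * chebU j lam)"
  have Uj: "chebU j lam > 0" "chebU (Suc j) lam > 0" "chebU (Suc (Suc j)) lam > 0"
    using chebU_pos[OF assms, of j] chebU_pos[OF assms, of "Suc j"] chebU_pos[OF assms, of "Suc (Suc j)"] by blast+
  have pp: "p > 0" unfolding p_def using Uj by simp
  have key: "p * (r j)\<^sup>2 - r j * r (Suc j) \<ge> - (r (Suc j))\<^sup>2 / (4*p)"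
  proof -
    have "0 \<le> (2*p*r j - r (Suc j))\<^sup>2 / (4*p)" using pp by simp
    also have "\<dots> = p * (r j)\<^sup>2 - r j * r (Suc j) + (r (Suc j))\<^sup>2 / (4*p)"
      using pp by (simp add: field_simps power2_eq_square)
    finally show ?thesis by simp
  qed
  have e: "lam - 1 / (4*p) = chebU (Suc (Suc j)) lam / (2 * chebU (Suc j) lam)"
  proof -
    have r: "chebU (Suc (Suc j)) lam = 2*lam*chebU (Suc j) lam - chebU j lam" by simp
    show ?thesis unfolding p_def r using Uj(1,2) by (simp add: field_simps)
  qed
  have "lam * (\<Sum>i\<le>Suc j. (r i)\<^sup>2) - (\<Sum>i<Suc j. r i * r (Suc i))
     = (lam * (\<Sum>i\<le>j. (r i)\<^sup>2) - (\<Sum>i<j. r i * r (Suc i))) - r j * r (Suc j) + lam * (r (Suc j))\<^sup>2"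
    by (simp add: algebra_simps)
  also have "\<dots> \<ge> p * (r j)\<^sup>2 - r j * r (Suc j) + lam * (r (Suc j))\<^sup>2"
    using Suc p_def by simp
  finally have "lam * (\<Sum>i\<le>Suc j. (r i)\<^sup>2) - (\<Sum>i<Suc j. r i * r (Suc i)) \<ge> (lam - 1/(4*p)) * (r (Suc j))\<^sup>2"
    using key by (simp add: algebra_simps)
  then show ?case using e by simp
qed


lemma fourid:
  fixes a b c d w a' b' c' d' w' mu t :: "'a::comm_ring_1"
  assumes "2*mu*t = 1" "w*w' = 1"
  shows "2*(mu * (a*a') + t * (b*b') + t*(c*c') + mu*(d*d')) + (b*b') + (c*c') -
        (w * (a' * b + b' * c + c' * d + a' * c - b' * d) +
         w' * (a * b' + b * c' + c * d' + a * c' - b * d')) =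
        2*(mu * ((a - w * (b + c) * t) * (a' - w' * (b' + c') * t)) +
        mu * ((d - w' * (c - b) * t) * (d' - w * (c' - b') * t))) +
        (b - w * c) * (b' - w' * c')"
proof -
  have e1: "2*(mu * ((a - w * (b + c) * t) * (a' - w' * (b' + c') * t)) +
        mu * ((d - w' * (c - b) * t) * (d' - w * (c' - b') * t))) +
        (b - w * c) * (b' - w' * c') =
     2*(mu * (a*a') + mu*(d*d')) - (2*mu*t) * (a*w'*(b'+c') + a'*w*(b+c) + d*w*(c'-b') + d'*w'*(c-b))
     + (2*mu*t)*t*((w*w')*((b+c)*(b'+c') + (c-b)*(c'-b'))) + b*b' + (w*w')*c*c' - w'*b*c' - w*b'*c"
    by (simp add: algebra_simps)
  show ?thesis unfolding e1 assms by (simp add: algebra_simps)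
qed

lemma four:
  fixes a b c d w :: complex and mu lam :: real
  assumes w: "w * cnj w = 1" and mu: "mu > 0" and rel: "2*mu*lam - mu = 1"
  shows "Re (w * (cnj a * b + cnj b * c + cnj c * d + cnj a * c - cnj b * d))
     \<le> mu * (cmod a)\<^sup>2 + lam * (cmod b)\<^sup>2 + lam * (cmod c)\<^sup>2 + mu * (cmod d)\<^sup>2"
proof -
  define t where "t = 1 / (2*mu)"
  have t: "2 * complex_of_real mu * complex_of_real t = 1" unfolding t_def using mu by simp
  have lam: "lam = t + 1/2" using rel mu unfolding t_def by (simp add: field_simps)
  define X where "X = a - w * (b + c) * t"
  define Y where "Y = d - cnj w * (c - b) * t"
  define Z where "Z = b - w * c"
  have re2: "\<And>z. 2 * complex_of_real (Re z) = z + cnj z"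
    by (simp add: complex_add_cnj)
  have id: "complex_of_real (2 * (mu * (cmod a)\<^sup>2 + lam * (cmod b)\<^sup>2 + lam * (cmod c)\<^sup>2 + mu * (cmod d)\<^sup>2)
      - 2 * Re (w * (cnj a * b + cnj b * c + cnj c * d + cnj a * c - cnj b * d)))
    = complex_of_real (2 * (mu * (cmod X)\<^sup>2 + mu * (cmod Y)\<^sup>2) + (cmod Z)\<^sup>2)"
  proof -
    have w': "w * cnj w = 1" by (rule w)
    show ?thesis
      unfolding of_real_add of_real_diff of_real_mult complex_norm_square re2 of_real_numeral
        X_def Y_def Z_def lam
      using fourid[OF t w', of a "cnj a" b "cnj b" c "cnj c" d "cnj d"] by (simp add: algebra_simps)
  qed
  have "2 * (mu * (cmod X)\<^sup>2 + mu * (cmod Y)\<^sup>2) + (cmod Z)\<^sup>2 \<ge> 0" using mu by simp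
  moreover have "2 * (mu * (cmod a)\<^sup>2 + lam * (cmod b)\<^sup>2 + lam * (cmod c)\<^sup>2 + mu * (cmod d)\<^sup>2) - 2 * Re (w * (cnj a * b + cnj b * c + cnj c * d + cnj a * c - cnj b * d)) = 2 * (mu * (cmod X)\<^sup>2 + mu * (cmod Y)\<^sup>2) + (cmod Z)\<^sup>2" using of_real_eq_iff[THEN iffD1, OF id] by simp
  ultimately show ?thesis by (smt (verit))
qed



definition cc :: "nat \<Rightarrow> nat \<Rightarrow> nat \<Rightarrow> complex" where
  "cc m i j = (if j = Suc i then 1 else 0) + (if Suc i = m - 1 \<and> Suc j = m + 1 then 1 else 0)
              - (if Suc i = m \<and> Suc j = m + 2 then 1 else 0)"

lemma C_dims: "dim_row (C_mat m) = 2*m" "dim_col (C_mat m) = 2*m"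
  by (simp_all add: C_mat_def J_mat_def E_unit_def)

lemma C_entry: "i < 2*m \<Longrightarrow> j < 2*m \<Longrightarrow> C_mat m $$ (i,j) = cc m i j"
  by (simp add: C_mat_def J_mat_def E_unit_def cc_def)

lemma H_dims: "dim_row (H_mat (C_mat m) th) = 2*m" "dim_col (H_mat (C_mat m) th) = 2*m"
  by (simp_all add: H_mat_def C_dims ctrans_def)

lemma cnj_cc: "cnj (cc m i j) = cc m i j" by (simp add: cc_def)

lemma exp_cnj': "exp (\<i> * complex_of_real t) = cnj (exp (- \<i> * complex_of_real t))"
proof -
  have "exp (- \<i> * complex_of_real t) = cis (-t)" using cis_conv_exp[of "-t"] by simp
  moreover have "exp (\<i> * complex_of_real t) = cis t" using cis_conv_exp[of t] by simp
  ultimately show ?thesis by (simp add: cis_cnj)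
qed

lemma H_entry: "i < 2*m \<Longrightarrow> j < 2*m \<Longrightarrow>
   H_mat (C_mat m) th $$ (i,j) = (exp (- \<i> * complex_of_real th) * cc m i j + cnj (exp (- \<i> * complex_of_real th)) * cc m j i) / 2"
  by (simp add: H_mat_def C_dims ctrans_def C_entry cnj_cc exp_cnj')

lemma sum_delta_lt: "a < (n::nat) \<Longrightarrow> (\<Sum>j<n. if j = a then x j else 0) = (x a :: complex)"
  by (subst sum.delta) auto
lemma sum_delta_ge: "\<not> a < (n::nat) \<Longrightarrow> (\<Sum>j<n. if j = a then x j else 0) = (0 :: complex)"
  by (subst sum.delta) auto
lemma cc_pt: "m \<ge> 2 \<Longrightarrow> cc m i j * x j = (if j = Suc i then x j else 0)
   + (if Suc i = m - 1 then (if j = m then x j else 0) else 0)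
   - (if Suc i = m then (if j = m + 1 then x j else 0) else 0)"
  unfolding cc_def by (cases "j = Suc i"; cases "Suc i = m - 1"; cases "Suc i = m"; cases "j = m"; cases "j = m+1"; simp)

lemma cc_pt2: "m \<ge> 2 \<Longrightarrow> cc m j i * x j = (if i > 0 then (if j = i - 1 then x j else 0) else 0)
   + (if i = m then (if j = m - 2 then x j else 0) else 0)
   - (if i = m + 1 then (if j = m - 1 then x j else 0) else 0)"
  unfolding cc_def by (cases "i = Suc j"; cases "Suc j = m - 1"; cases "Suc j = m"; cases "i = m"; cases "i = m+1"; cases "i = m+2"; cases "i = 0"; auto)

lemma sum3: "(\<Sum>j<(n::nat). (f j + g j - h j :: complex)) = (\<Sum>j<n. f j) + (\<Sum>j<n. g j) - (\<Sum>j<n. h j)"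
  by (simp add: sum.distrib sum_subtractf)

lemma sum_cond: "(\<Sum>j<(n::nat). if P then (if j = a then x j else 0) else 0) = (if P \<and> a < n then x a else (0::complex))"
  by (cases P) (simp_all add: sum_delta_lt sum_delta_ge)

lemma sumR: "m \<ge> 2 \<Longrightarrow> (\<Sum>j<2*m. cc m i j * x j) =
   (if Suc i < 2*m then x (Suc i) else 0) + (if Suc i = m - 1 then x m else 0) - (if Suc i = m then x (m+1) else 0)"
  apply (simp only: cc_pt sum3 sum_cond)
  apply (simp add: sum_delta_lt sum_delta_ge)
  done

lemma sumL: "m \<ge> 2 \<Longrightarrow> i < 2*m \<Longrightarrow> (\<Sum>j<2*m. cc m j i * x j) =
   (if i > 0 then x (i - 1) else 0) + (if i = m then x (m - 2) else 0) - (if i = m + 1 then x (m - 1) else 0)"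
  apply (simp only: cc_pt2 sum3 sum_cond)
  apply auto
  done



definition W :: "real \<Rightarrow> nat \<Rightarrow> real" where
  "W lam j = (if j = 0 then 0 else chebU (j - 1) lam)"

lemma W_rec: "W lam (Suc (Suc j)) = 2 * lam * W lam (Suc j) - W lam j"
  by (cases j) (simp_all add: W_def)

lemma W_0[simp]: "W lam 0 = 0" by (simp add: W_def)

definition fv :: "nat \<Rightarrow> real \<Rightarrow> complex \<Rightarrow> complex \<Rightarrow> complex \<Rightarrow> nat \<Rightarrow> complex" where
  "fv m lam \<eta> \<alpha> q i = \<eta> ^ i * (if i \<le> m - 2 then complex_of_real (W lam (Suc i))
      else if i \<le> m then \<alpha> * complex_of_real (W lam m) else q * complex_of_real (W lam (2*m - i)))"

lemma row_eq:
  fixes \<eta> \<alpha> q :: complex and lam :: real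
  assumes p: "m = p + 2" and i: "i < 2*m"
    and he: "\<eta> * cnj \<eta> = 1" and ha: "\<alpha> * (1 + \<eta>) = 1" and hq: "q * (1 + \<eta>) = 1 - cnj \<eta>"
    and hrel: "(2*lam - 1) * W lam (p+2) = 2 * W lam (p+1)"
  defines "f \<equiv> fv m lam \<eta> \<alpha> q"
  shows "(cnj \<eta> * (f (Suc i) + (if Suc i = m - 1 then f m else 0) - (if Suc i = m then f (m+1) else 0))
        + \<eta> * ((if i > 0 then f (i - 1) else 0) + (if i = m then f (m - 2) else 0) - (if i = m + 1 then f (m - 1) else 0))) / 2
        = complex_of_real lam * f i"
proof -
  have hrelc: "(2*complex_of_real lam - 1) * complex_of_real (W lam (p+2)) = 2 * complex_of_real (W lam (p+1))"
    using arg_cong[OF hrel, of complex_of_real] by simp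
  have recc: "\<And>j. complex_of_real (W lam (Suc (Suc j))) = 2 * complex_of_real lam * complex_of_real (W lam (Suc j)) - complex_of_real (W lam j)"
    by (simp add: W_rec)
  define l where "l = complex_of_real lam"
  define b where "b = \<eta> ^ p"
  define w0 where "w0 = complex_of_real (W lam p)"
  define w1 where "w1 = complex_of_real (W lam (p+1))"
  define w2 where "w2 = complex_of_real (W lam (p+2))"
  have rec2: "w2 = 2 * l * w1 - w0" unfolding w0_def w1_def w2_def l_def using recc[of p] by simp
  have hrel2: "(2 * l - 1) * w2 = 2 * w1" unfolding w1_def w2_def l_def using hrelc by simp
  have fp: "f p = b * w1" unfolding f_def fv_def b_def w1_def using p by simp
  have fp1: "f (p+1) = b * \<eta> * \<alpha> * w2" unfolding f_def fv_def b_def w2_def using p by simp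
  have fp2: "f (p+2) = b * \<eta> * \<eta> * \<alpha> * w2" unfolding f_def fv_def b_def w2_def using p by (simp add: power_add)
  have fp3: "f (p+3) = b * \<eta> * \<eta> * \<eta> * q * w1" unfolding f_def fv_def b_def w1_def using p by (simp add: power_add numeral_3_eq_3)
  have fp4: "f (p+4) = b * \<eta> * \<eta> * \<eta> * \<eta> * q * w0" unfolding f_def fv_def b_def w0_def using p
    by (simp add: power_add numeral_Bit0 eval_nat_numeral)
  have Lp: "\<eta> * (if p > 0 then f (p - 1) else 0) = b * w0"
  proof (cases p)
    case 0 then show ?thesis unfolding b_def w0_def by simp
  next
    case (Suc p')
    then show ?thesis unfolding f_def fv_def b_def w0_def using p by simp
  qed
  consider (A) "i < p" | (B) "i = p" | (C) "i = p+1" | (D) "i = p+2" | (E) "i = p+3" | (F) "p+4 \<le> i"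
    by linarith
  then show ?thesis
  proof cases
    case A
    define e where "e = \<eta> ^ i"
    define v0 where "v0 = complex_of_real (W lam i)"
    define v1 where "v1 = complex_of_real (W lam (i+1))"
    define v2 where "v2 = complex_of_real (W lam (i+2))"
    have rec: "v2 = 2 * l * v1 - v0" unfolding v0_def v1_def v2_def l_def using recc[of i] by simp
    have lhs: "?thesis \<longleftrightarrow> (cnj \<eta> * f (Suc i) + \<eta> * (if i > 0 then f (i - 1) else 0)) / 2 = l * f i"
      using A p unfolding l_def by simp
    have f1: "f i = e * v1" using A p unfolding f_def fv_def e_def v1_def by simp
    have f2: "f (Suc i) = e * \<eta> * v2" using A p unfolding f_def fv_def e_def v2_def by simp
    have L: "\<eta> * (if i > 0 then f (i - 1) else 0) = e * v0"
    proof (cases i)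
      case 0 then show ?thesis unfolding e_def v0_def by simp
    next
      case (Suc i')
      then show ?thesis unfolding f_def fv_def e_def v0_def using p A by simp
    qed
    have "(cnj \<eta> * (e * \<eta> * v2) + e * v0) / 2 = l * (e * v1)"
      using he rec by Groebner_Basis.algebra
    then show ?thesis by (intro lhs[THEN iffD2], unfold f1 f2 L)
  next
    case B
    have lhs: "?thesis \<longleftrightarrow> (cnj \<eta> * (f (p+1) + f (p+2)) + \<eta> * (if p > 0 then f (p - 1) else 0)) / 2 = l * f p"
      using B p unfolding l_def by (simp add: add.commute eval_nat_numeral)
    have "(cnj \<eta> * (b * \<eta> * \<alpha> * w2 + b * \<eta> * \<eta> * \<alpha> * w2) + b * w0) / 2 = l * (b * w1)"
      using he ha rec2 by Groebner_Basis.algebra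
    then show ?thesis by (intro lhs[THEN iffD2], unfold fp fp1 fp2 Lp)
  next
    case C
    have lhs: "?thesis \<longleftrightarrow> (cnj \<eta> * (f (p+2) - f (p+3)) + \<eta> * f p) / 2 = l * f (p+1)"
      using C p unfolding l_def by (simp add: add.commute eval_nat_numeral)
    have "(cnj \<eta> * (b * \<eta> * \<eta> * \<alpha> * w2 - b * \<eta> * \<eta> * \<eta> * q * w1) + \<eta> * (b * w1)) / 2 = l * (b * \<eta> * \<alpha> * w2)"
      using he ha hq hrel2 by Groebner_Basis.algebra
    then show ?thesis by (intro lhs[THEN iffD2], unfold fp fp1 fp2 fp3)
  next
    case D
    have lhs: "?thesis \<longleftrightarrow> (cnj \<eta> * f (p+3) + \<eta> * (f (p+1) + f p)) / 2 = l * f (p+2)"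
      using D p unfolding l_def by (simp add: add.commute eval_nat_numeral)
    have "(cnj \<eta> * (b * \<eta> * \<eta> * \<eta> * q * w1) + \<eta> * (b * \<eta> * \<alpha> * w2 + b * w1)) / 2 = l * (b * \<eta> * \<eta> * \<alpha> * w2)"
      using he ha hq hrel2 by Groebner_Basis.algebra
    then show ?thesis by (intro lhs[THEN iffD2], unfold fp fp1 fp2 fp3)
  next
    case E
    have lhs: "?thesis \<longleftrightarrow> (cnj \<eta> * f (p+4) + \<eta> * (f (p+2) - f (p+1))) / 2 = l * f (p+3)"
      using E p unfolding l_def by (simp add: add.commute eval_nat_numeral)
    have "(cnj \<eta> * (b * \<eta> * \<eta> * \<eta> * \<eta> * q * w0) + \<eta> * (b * \<eta> * \<eta> * \<alpha> * w2 - b * \<eta> * \<alpha> * w2)) / 2 = l * (b * \<eta> * \<eta> * \<eta> * q * w1)"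
      using he ha hq rec2 by Groebner_Basis.algebra
    then show ?thesis by (intro lhs[THEN iffD2], unfold fp fp1 fp2 fp3 fp4)
  next
    case F
    define t where "t = 2*p+3-i"
    have t: "i = 2*p + 3 - t" "t < p" using F i p unfolding t_def by auto
    define e where "e = \<eta> ^ (i - 1)"
    define v0 where "v0 = complex_of_real (W lam t)"
    define v1 where "v1 = complex_of_real (W lam (t+1))"
    define v2 where "v2 = complex_of_real (W lam (t+2))"
    have rec: "v2 = 2 * l * v1 - v0" unfolding v0_def v1_def v2_def l_def using recc[of t] by simp
    have lhs: "?thesis \<longleftrightarrow> (cnj \<eta> * f (Suc i) + \<eta> * f (i - 1)) / 2 = l * f i"
      using F p unfolding l_def by simp
    have a0: "\<not> i - 1 \<le> m - 2" "\<not> i - 1 \<le> m" "2*m - (i-1) = t+2" using t p F by auto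
    have a1: "\<not> i \<le> m - 2" "\<not> i \<le> m" "2*m - i = t+1" using t p F by auto
    have a2: "\<not> Suc i \<le> m - 2" "\<not> Suc i \<le> m" "2*m - Suc i = t" using t p F by auto
    have pi1: "\<eta> ^ i = \<eta> ^ (i - 1) * \<eta>"
    proof -
      have "i = Suc (i - 1)" using F by simp
      then show ?thesis by (metis power_Suc2)
    qed
    have f0: "f (i - 1) = e * q * v2" unfolding f_def fv_def e_def v2_def using a0 by simp
    have f1: "f i = e * \<eta> * q * v1" unfolding f_def fv_def e_def v1_def using a1 pi1 by simp
    have f2: "f (Suc i) = e * \<eta> * \<eta> * q * v0" unfolding f_def fv_def e_def v0_def using a2 pi1 by simp
    have "(cnj \<eta> * (e * \<eta> * \<eta> * q * v0) + \<eta> * (e * q * v2)) / 2 = l * (e * \<eta> * q * v1)"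
      using he rec by Groebner_Basis.algebra
    then show ?thesis by (intro lhs[THEN iffD2], unfold f0 f1 f2)
  qed
qed



lemma split1:
  fixes g :: "nat \<Rightarrow> real"
  shows "(\<Sum>i<2*k+4. g i) = (\<Sum>i\<le>k. g i) + g (k+1) + g (k+2) + (\<Sum>i\<le>k. g (2*k+3-i))"
proof -
  have r: "(\<Sum>i\<le>k. g (2*k+3-i)) = (\<Sum>i\<in>{k+3..<2*k+4}. g i)"
    by (rule sum.reindex_bij_witness[of _ "\<lambda>j. 2*k+3-j" "\<lambda>i. 2*k+3-i"]) auto
  have a: "(\<Sum>i<2*k+4. g i) = (\<Sum>i\<in>{0..<k+1}. g i) + (\<Sum>i\<in>{k+1..<k+3}. g i) + (\<Sum>i\<in>{k+3..<2*k+4}. g i)"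
  proof -
    have "(\<Sum>i\<in>{0..<k+1}. g i) + (\<Sum>i\<in>{k+1..<k+3}. g i) = (\<Sum>i\<in>{0..<k+3}. g i)"
      by (rule sum.atLeastLessThan_concat) auto
    moreover have "(\<Sum>i\<in>{0..<k+3}. g i) + (\<Sum>i\<in>{k+3..<2*k+4}. g i) = (\<Sum>i\<in>{0..<2*k+4}. g i)"
      by (rule sum.atLeastLessThan_concat) auto
    ultimately show ?thesis by (simp add: atLeast0LessThan)
  qed
  have b: "(\<Sum>i\<in>{k+1..<k+3}. g i) = g (k+1) + g (k+2)"
    by (simp add: numeral_3_eq_3)
  have c: "(\<Sum>i\<in>{0..<k+1}. g i) = (\<Sum>i\<le>k. g i)"
    by (simp add: atLeast0LessThan lessThan_Suc_atMost)
  show ?thesis using a b c r by simp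
qed

lemma split2:
  fixes h :: "nat \<Rightarrow> real"
  shows "(\<Sum>i<2*k+3. h i) = (\<Sum>i<k. h i) + h k + h (k+1) + h (k+2) + (\<Sum>i<k. h (2*k+2-i))"
proof -
  have r: "(\<Sum>i<k. h (2*k+2-i)) = (\<Sum>i\<in>{k+3..<2*k+3}. h i)"
    by (rule sum.reindex_bij_witness[of _ "\<lambda>j. 2*k+2-j" "\<lambda>i. 2*k+2-i"]) auto
  have a: "(\<Sum>i<2*k+3. h i) = (\<Sum>i\<in>{0..<k}. h i) + (\<Sum>i\<in>{k..<k+3}. h i) + (\<Sum>i\<in>{k+3..<2*k+3}. h i)"
  proof -
    have "(\<Sum>i\<in>{0..<k}. h i) + (\<Sum>i\<in>{k..<k+3}. h i) = (\<Sum>i\<in>{0..<k+3}. h i)"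
      by (rule sum.atLeastLessThan_concat) auto
    moreover have "(\<Sum>i\<in>{0..<k+3}. h i) + (\<Sum>i\<in>{k+3..<2*k+3}. h i) = (\<Sum>i\<in>{0..<2*k+3}. h i)"
      by (rule sum.atLeastLessThan_concat) auto
    ultimately show ?thesis by (simp add: atLeast0LessThan)
  qed
  have b: "(\<Sum>i\<in>{k..<k+3}. h i) = h k + h (k+1) + h (k+2)"
    by (simp add: numeral_3_eq_3)
  show ?thesis using a b r by (simp add: atLeast0LessThan)
qed



lemma re_le_cmod_prod: "cmod w = 1 \<Longrightarrow> Re (w * (cnj a * b)) \<le> cmod a * cmod b"
proof -
  assume w: "cmod w = 1"
  have "Re (w * (cnj a * b)) \<le> cmod (w * (cnj a * b))" by (rule complex_Re_le_cmod)
  also have "\<dots> = cmod a * cmod b" using w by (simp add: norm_mult)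
  finally show ?thesis .
qed

lemma qform:
  fixes x :: "nat \<Rightarrow> complex" and w :: complex and lam :: real
  assumes m: "m = k + 2" and w: "w * cnj w = 1" and lam: "lam \<ge> 1"
    and hrel: "(2*lam - 1) * chebU (k+1) lam = 2 * chebU k lam"
  shows "Re (w * ((\<Sum>i<2*m-1. cnj (x i) * x (Suc i)) + cnj (x k) * x (k+2) - cnj (x (k+1)) * x (k+3)))
         \<le> lam * (\<Sum>i<2*m. (cmod (x i))\<^sup>2)"
proof -
  have cw: "cmod w = 1"
  proof -
    have "(cmod w)\<^sup>2 = 1" using w by (metis complex_norm_square of_real_eq_1_iff)
    then show ?thesis using norm_ge_zero[of w] by (auto simp add: power2_eq_1_iff)
  qed
  define mu where "mu = chebU (k+1) lam / (2 * chebU k lam)"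
  have Uk: "chebU k lam > 0" "chebU (k+1) lam > 0" using chebU_pos[OF lam] by auto
  have mu0: "mu > 0" unfolding mu_def using Uk by simp
  have murel: "2*mu*lam - mu = 1"
  proof -
    have "2*mu*lam - mu = (2*lam - 1) * chebU (k+1) lam / (2 * chebU k lam)"
      unfolding mu_def using Uk by (simp add: field_simps)
    also have "\<dots> = 1" using hrel Uk by simp
    finally show ?thesis .
  qed
  define r where "r i = cmod (x i)" for i
  define r' where "r' i = cmod (x (2*k+3-i))" for i
  define h where "h i = Re (w * (cnj (x i) * x (Suc i)))" for i
  have tl1: "lam * (\<Sum>i\<le>k. (r i)\<^sup>2) - (\<Sum>i<k. r i * r (Suc i)) \<ge> mu * (r k)\<^sup>2"
    using tail[OF lam, where r=r and j=k] unfolding mu_def by simp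
  have tl2: "lam * (\<Sum>i\<le>k. (r' i)\<^sup>2) - (\<Sum>i<k. r' i * r' (Suc i)) \<ge> mu * (r' k)\<^sup>2"
    using tail[OF lam, where r=r' and j=k] unfolding mu_def by simp
  have h1: "(\<Sum>i<k. h i) \<le> (\<Sum>i<k. r i * r (Suc i))"
    by (rule sum_mono) (unfold h_def r_def, rule re_le_cmod_prod[OF cw])
  have h2: "(\<Sum>i<k. h (2*k+2-i)) \<le> (\<Sum>i<k. r' i * r' (Suc i))"
  proof (rule sum_mono)
    fix i assume "i \<in> {..<k}"
    then have e: "Suc (2*k+2-i) = 2*k+3-i" "2*k+3 - Suc i = 2*k+2-i" by auto
    show "h (2*k+2-i) \<le> r' i * r' (Suc i)"
      unfolding h_def r'_def e using re_le_cmod_prod[OF cw, of "x (2*k+2-i)" "x (2*k+3-i)"] by (simp add: mult.commute)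
  qed
  have N: "(\<Sum>i<2*m. (cmod (x i))\<^sup>2) = (\<Sum>i\<le>k. (r i)\<^sup>2) + (cmod (x (k+1)))\<^sup>2 + (cmod (x (k+2)))\<^sup>2 + (\<Sum>i\<le>k. (r' i)\<^sup>2)"
  proof -
    have e: "2*m = 2*k+4" using m by simp
    show ?thesis unfolding e r_def r'_def by (rule split1)
  qed
  have S: "Re (w * ((\<Sum>i<2*m-1. cnj (x i) * x (Suc i)) + cnj (x k) * x (k+2) - cnj (x (k+1)) * x (k+3)))
      = (\<Sum>i<k. h i) + h k + h (k+1) + h (k+2) + (\<Sum>i<k. h (2*k+2-i))
        + Re (w * (cnj (x k) * x (k+2))) - Re (w * (cnj (x (k+1)) * x (k+3)))"
  proof -
    have "Re (w * (\<Sum>i<2*m-1. cnj (x i) * x (Suc i))) = (\<Sum>i<2*k+3. h i)"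
    proof -
      have e: "2*m-1 = 2*k+3" using m by simp
      show ?thesis unfolding e h_def by (simp only: sum_distrib_left Re_sum)
    qed
    then show ?thesis using split2[of h k] by (simp add: algebra_simps)
  qed
  have rk: "r k = cmod (x k)" "r' k = cmod (x (k+3))" unfolding r_def r'_def by (simp_all add: numeral_3_eq_3)
  have F: "Re (w * (cnj (x k) * x (k+1) + cnj (x (k+1)) * x (k+2) + cnj (x (k+2)) * x (k+3) + cnj (x k) * x (k+2) - cnj (x (k+1)) * x (k+3)))
     \<le> mu * (cmod (x k))\<^sup>2 + lam * (cmod (x (k+1)))\<^sup>2 + lam * (cmod (x (k+2)))\<^sup>2 + mu * (cmod (x (k+3)))\<^sup>2"
    by (rule four[OF w mu0 murel])
  have Fsplit: "Re (w * (cnj (x k) * x (k+1) + cnj (x (k+1)) * x (k+2) + cnj (x (k+2)) * x (k+3) + cnj (x k) * x (k+2) - cnj (x (k+1)) * x (k+3)))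
     = h k + h (k+1) + h (k+2) + Re (w * (cnj (x k) * x (k+2))) - Re (w * (cnj (x (k+1)) * x (k+3)))"
    unfolding h_def by (simp add: algebra_simps numeral_3_eq_3)
  show ?thesis unfolding S N using tl1 tl2 h1 h2 F Fsplit rk by (simp add: algebra_simps)
qed



lemma H_row0:
  assumes m: "m \<ge> 2" and v: "dim_vec v = 2*m" and i: "i < 2*m"
  shows "(H_mat (C_mat m) th *\<^sub>v v) $ i =
    (exp (- \<i> * complex_of_real th) * (\<Sum>j<2*m. cc m i j * v $ j)
     + cnj (exp (- \<i> * complex_of_real th)) * (\<Sum>j<2*m. cc m j i * v $ j)) / 2"
proof -
  let ?w = "exp (- \<i> * complex_of_real th)"
  have "(H_mat (C_mat m) th *\<^sub>v v) $ i = (\<Sum>j<2*m. H_mat (C_mat m) th $$ (i,j) * v $ j)"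
    using assms by (simp add: H_dims scalar_prod_def atLeast0LessThan)
  also have "\<dots> = (\<Sum>j<2*m. (?w * (cc m i j * v $ j) + cnj ?w * (cc m j i * v $ j)) / 2)"
  proof (rule sum.cong[OF refl])
    fix j assume "j \<in> {..<2*m}"
    then have j: "j < 2*m" by simp
    show "H_mat (C_mat m) th $$ (i,j) * v $ j = (?w * (cc m i j * v $ j) + cnj ?w * (cc m j i * v $ j)) / 2"
      unfolding H_entry[OF i j] by (simp add: algebra_simps)
  qed
  also have "\<dots> = (?w * (\<Sum>j<2*m. cc m i j * v $ j) + cnj ?w * (\<Sum>j<2*m. cc m j i * v $ j)) / 2"
    by (simp add: sum.distrib sum_distrib_left sum_divide_distrib[symmetric])
  finally show ?thesis .
qed

lemma H_row:
  assumes m: "m \<ge> 2" and v: "dim_vec v = 2*m" and i: "i < 2*m"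
  shows "(H_mat (C_mat m) th *\<^sub>v v) $ i =
    (exp (- \<i> * complex_of_real th) * ((if Suc i < 2*m then v $ (Suc i) else 0) + (if Suc i = m - 1 then v $ m else 0) - (if Suc i = m then v $ (m+1) else 0))
     + cnj (exp (- \<i> * complex_of_real th)) * ((if i > 0 then v $ (i - 1) else 0) + (if i = m then v $ (m - 2) else 0) - (if i = m + 1 then v $ (m - 1) else 0))) / 2"
  unfolding H_row0[OF assms] sumR[OF m] sumL[OF m i] ..

lemma eig:
  fixes \<eta> \<alpha> q :: complex and lam :: real
  assumes m: "m \<ge> 2"
    and he: "\<eta> * cnj \<eta> = 1" and ha: "\<alpha> * (1 + \<eta>) = 1" and hq: "q * (1 + \<eta>) = 1 - cnj \<eta>"
    and hrel: "(2*lam - 1) * W lam m = 2 * W lam (m - 1)"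
    and hth: "exp (- \<i> * complex_of_real th) = cnj \<eta>"
  shows "H_mat (C_mat m) th *\<^sub>v vec (2*m) (fv m lam \<eta> \<alpha> q) = complex_of_real lam \<cdot>\<^sub>v vec (2*m) (fv m lam \<eta> \<alpha> q)"
proof
  define f where "f = fv m lam \<eta> \<alpha> q"
  obtain p where p: "m = p + 2" using m by (metis add.commute le_Suc_ex)
  have hrel': "(2*lam - 1) * W lam (p+2) = 2 * W lam (p+1)" using hrel p by simp
  show "dim_vec (H_mat (C_mat m) th *\<^sub>v vec (2*m) (fv m lam \<eta> \<alpha> q)) = dim_vec (complex_of_real lam \<cdot>\<^sub>v vec (2*m) (fv m lam \<eta> \<alpha> q))"
    by (simp add: H_dims)
  fix i assume "i < dim_vec (complex_of_real lam \<cdot>\<^sub>v vec (2*m) (fv m lam \<eta> \<alpha> q))"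
  then have i: "i < 2*m" by simp
  have f2m: "f (2*m) = 0" unfolding f_def fv_def using m by simp
  have R: "(if Suc i < 2*m then vec (2*m) f $ (Suc i) else 0) = f (Suc i)"
  proof (cases "Suc i < 2*m")
    case False
    then have "Suc i = 2*m" using i by simp
    then show ?thesis using f2m False by simp
  qed simp
  have vm: "vec (2*m) f $ m = f m" "vec (2*m) f $ (m+1) = f (m+1)" "vec (2*m) f $ (m-2) = f (m-2)"
     "vec (2*m) f $ (m-1) = f (m-1)" "vec (2*m) f $ i = f i" using m i by auto
  have L: "(if i > 0 then vec (2*m) f $ (i - 1) else 0) = (if i > 0 then f (i - 1) else 0)"
    using i by auto
  have dv: "dim_vec (vec (2*m) f) = 2*m" by simp
  have "(H_mat (C_mat m) th *\<^sub>v vec (2*m) f) $ i =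
    (cnj \<eta> * (f (Suc i) + (if Suc i = m - 1 then f m else 0) - (if Suc i = m then f (m+1) else 0))
        + \<eta> * ((if i > 0 then f (i - 1) else 0) + (if i = m then f (m - 2) else 0) - (if i = m + 1 then f (m - 1) else 0))) / 2"
    unfolding H_row[OF m dv i] hth complex_cnj_cnj R vm L ..
  also have "\<dots> = complex_of_real lam * f i"
    using row_eq[OF p i he ha hq hrel'] unfolding f_def by simp
  finally show "(H_mat (C_mat m) th *\<^sub>v vec (2*m) (fv m lam \<eta> \<alpha> q)) $ i = (complex_of_real lam \<cdot>\<^sub>v vec (2*m) (fv m lam \<eta> \<alpha> q)) $ i"
    using i unfolding f_def by simp
qed



lemma w_unit: "exp (- \<i> * complex_of_real th) * cnj (exp (- \<i> * complex_of_real th)) = 1"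
  unfolding exp_cnj'[symmetric] by (simp add: exp_add[symmetric])

lemma bound:
  fixes lam :: real and \<nu> :: complex
  assumes m: "m \<ge> 2" and lam: "lam \<ge> 1"
    and hrel: "(2*lam - 1) * chebU (m-1) lam = 2 * chebU (m-2) lam"
    and ev: "eigenvalue (H_mat (C_mat m) th) \<nu>"
  shows "\<nu> \<in> \<real> \<and> Re \<nu> \<le> lam"
proof -
  let ?H = "H_mat (C_mat m) th"
  define w where "w = exp (- \<i> * complex_of_real th)"
  have w: "w * cnj w = 1" unfolding w_def by (rule w_unit)
  obtain v where v: "v \<in> carrier_vec (2*m)" "v \<noteq> 0\<^sub>v (2*m)" "?H *\<^sub>v v = \<nu> \<cdot>\<^sub>v v"
    using ev unfolding eigenvalue_def eigenvector_def H_dims by blast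
  have dv: "dim_vec v = 2*m" using v(1) by simp
  define x where "x j = v $ j" for j
  define N where "N = (\<Sum>i<2*m. (cmod (x i))\<^sup>2)"
  define S where "S = (\<Sum>i<2*m. \<Sum>j<2*m. cnj (x i) * cc m i j * x j)"
  define T where "T = (\<Sum>i<2*m. \<Sum>j<2*m. cnj (x i) * cc m j i * x j)"
  have row: "\<nu> * x i = (w * (\<Sum>j<2*m. cc m i j * x j) + cnj w * (\<Sum>j<2*m. cc m j i * x j)) / 2" if i: "i < 2*m" for i
  proof -
    have "\<nu> * x i = (?H *\<^sub>v v) $ i" using v(3) i dv unfolding x_def by simp
    also have "\<dots> = (w * (\<Sum>j<2*m. cc m i j * x j) + cnj w * (\<Sum>j<2*m. cc m j i * x j)) / 2" unfolding H_row0[OF m dv i] w_def x_def ..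
    finally show ?thesis .
  qed
  have "(\<Sum>i<2*m. cnj (x i) * (\<nu> * x i)) = (\<Sum>i<2*m. cnj (x i) * ((w * (\<Sum>j<2*m. cc m i j * x j) + cnj w * (\<Sum>j<2*m. cc m j i * x j)) / 2))"
    by (rule sum.cong[OF refl]) (simp add: row)
  also have "\<dots> = (w * S + cnj w * T) / 2"
    unfolding S_def T_def
    by (simp add: sum.distrib sum_distrib_left sum_divide_distrib[symmetric] algebra_simps)
  finally have e1: "(\<Sum>i<2*m. cnj (x i) * (\<nu> * x i)) = (w * S + cnj w * T) / 2" .
  have TS: "T = cnj S"
  proof -
    have "cnj S = (\<Sum>i<2*m. \<Sum>j<2*m. x i * cc m i j * cnj (x j))"
      unfolding S_def by (simp add: cnj_cc)
    also have "\<dots> = (\<Sum>j<2*m. \<Sum>i<2*m. x i * cc m i j * cnj (x j))"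
      by (rule sum.swap)
    also have "\<dots> = T" unfolding T_def by (simp add: algebra_simps)
    finally show ?thesis by simp
  qed
  have e2: "(\<Sum>i<2*m. cnj (x i) * (\<nu> * x i)) = \<nu> * complex_of_real N"
  proof -
    have h: "cnj z * (\<nu> * z) = \<nu> * complex_of_real ((cmod z)\<^sup>2)" for z
      by (subst complex_norm_square) (simp add: algebra_simps)
    show ?thesis unfolding N_def of_real_sum sum_distrib_left h ..
  qed
  have re: "(w * S + cnj w * T) / 2 = complex_of_real (Re (w * S))"
    unfolding TS by (simp add: complex_add_cnj[of "w * S", simplified])
  have key: "\<nu> * complex_of_real N = complex_of_real (Re (w * S))" using e1 e2 re by simp
  have Npos: "N > 0"
  proof -
    obtain i where i: "i < 2*m" "v $ i \<noteq> 0" using v(1,2) by (metis carrier_vecD eq_vecI index_zero_vec)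
    have "(cmod (x i))\<^sup>2 > 0" using i unfolding x_def by simp
    moreover have "(cmod (x i))\<^sup>2 \<le> N" unfolding N_def
      by (rule member_le_sum) (use i in auto)
    ultimately show ?thesis by linarith
  qed
  have nu: "\<nu> = complex_of_real (Re (w * S) / N)" using key Npos
    by (simp add: field_simps)
  obtain k where k: "m = k + 2" using m by (metis add.commute le_Suc_ex)
  have Sexp: "S = (\<Sum>i<2*m-1. cnj (x i) * x (Suc i)) + cnj (x k) * x (k+2) - cnj (x (k+1)) * x (k+3)"
  proof -
    have s1: "S = (\<Sum>i<2*m. cnj (x i) * (\<Sum>j<2*m. cc m i j * x j))"
      unfolding S_def by (simp add: sum_distrib_left mult.assoc)
    have pt: "cnj (x i) * (\<Sum>j<2*m. cc m i j * x j) = cnj (x i) * (if Suc i < 2*m then x (Suc i) else 0)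
       + (if i = k then cnj (x k) * x (k+2) else 0) - (if i = k+1 then cnj (x (k+1)) * x (k+3) else 0)" for i
      unfolding sumR[OF m] using k by (auto simp: algebra_simps numeral_3_eq_3)
    have path: "(\<Sum>i<2*m. cnj (x i) * (if Suc i < 2*m then x (Suc i) else 0)) = (\<Sum>i<2*m-1. cnj (x i) * x (Suc i))"
    proof -
      have e: "2*m = Suc (2*m-1)" using m by simp
      have "(\<Sum>i<Suc (2*m-1). cnj (x i) * (if Suc i < 2*m then x (Suc i) else 0)) = (\<Sum>i<2*m-1. cnj (x i) * x (Suc i))"
      proof -
        have a: "\<not> Suc (2*m-1) < 2*m" using m by simp
        have b: "(\<Sum>i<2*m-1. cnj (x i) * (if Suc i < 2*m then x (Suc i) else 0)) = (\<Sum>i<2*m-1. cnj (x i) * x (Suc i))"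
          by (rule sum.cong) auto
        show ?thesis using a b by (simp only: sum.lessThan_Suc) simp
      qed
      then show ?thesis using e by metis
    qed
    have kk: "k < 2*m" "k+1 < 2*m" using k by auto
    show ?thesis unfolding s1 pt sum3 path
      using sum_delta_lt[OF kk(1), of "\<lambda>_. cnj (x k) * x (k+2)"] sum_delta_lt[OF kk(2), of "\<lambda>_. cnj (x (k+1)) * x (k+3)"]
      by simp
  qed
  have hrel': "(2*lam - 1) * chebU (k+1) lam = 2 * chebU k lam" using hrel k by simp
  have "Re (w * S) \<le> lam * N" unfolding Sexp N_def by (rule qform[OF k w lam hrel'])
  then have "Re (w * S) / N \<le> lam" using Npos by (simp add: divide_le_eq)
  then show ?thesis using nu by simp
qed



lemma chebU_cont2: "isCont (\<lambda>u. chebU k u) x \<and> isCont (\<lambda>u. chebU (Suc k) u) x"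
proof (induction k)
  case 0 then show ?case by simp
next
  case (Suc k)
  then have "isCont (\<lambda>u. 2 * u * chebU (Suc k) u - chebU k u) x" by (intro continuous_intros) auto
  then show ?case using Suc by simp
qed

lemma chebU_one2: "chebU k 1 = real k + 1 \<and> chebU (Suc k) 1 = real k + 2"
  by (induction k) (simp_all add: algebra_simps)

lemma lam_ge1:
  assumes m: "m \<ge> 2" and largest: "\<forall>x. P_poly m x = 0 \<longrightarrow> x \<le> lam"
  shows "lam \<ge> 1"
proof -
  obtain k where k: "m = k + 2" using m by (metis add.commute le_Suc_ex)
  have p1: "P_poly m 1 \<le> 0"
    unfolding P_poly_def k using chebU_one2[of k] chebU_one2[of "Suc k"] by simp
  have g: "chebU k 2 \<ge> 1" "chebU (Suc k) 2 \<ge> chebU k 2" using chebU_ge1[of 2 k] by auto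
  have p2: "P_poly m 2 \<ge> 0"
    unfolding P_poly_def k using g by simp
  have c: "\<forall>x. 1 \<le> x \<and> x \<le> 2 \<longrightarrow> isCont (P_poly m) x"
  proof (intro allI impI)
    fix x :: real
    have "isCont (\<lambda>u. chebU m u - chebU (m - 1) u - chebU (m - 2) u) x"
      using chebU_cont2[where k=m and x=x] chebU_cont2[where k="m-1" and x=x] chebU_cont2[where k="m-2" and x=x] by (intro continuous_intros) auto
    then show "isCont (P_poly m) x" unfolding P_poly_def[abs_def] by simp
  qed
  obtain x where "1 \<le> x" "x \<le> 2" "P_poly m x = 0" using IVT[of "P_poly m" 1 0 2, OF p1 p2 _ c] by auto
  then show ?thesis using largest by force
qed

lemma hrel_of_root:
  assumes m: "m \<ge> 2" and root: "P_poly m lam = 0"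
  shows "(2*lam - 1) * chebU (m-1) lam = 2 * chebU (m-2) lam"
proof -
  obtain k where k: "m = k + 2" using m by (metis add.commute le_Suc_ex)
  show ?thesis using root unfolding P_poly_def k by (simp add: algebra_simps)
qed

lemma largest_ev:
  assumes m: "m \<ge> 2" and lam: "lam \<ge> 1"
    and hrel: "(2*lam - 1) * chebU (m-1) lam = 2 * chebU (m-2) lam"
    and ev: "eigenvalue (H_mat (C_mat m) th) (complex_of_real lam)"
  shows "largest_eigenvalue (H_mat (C_mat m) th) (complex_of_real lam)"
  unfolding largest_eigenvalue_def using ev bound[OF m lam hrel] by auto

lemma eigvec:
  fixes \<eta> \<alpha> q :: complex and lam :: real
  assumes m: "m \<ge> 2"
    and he: "\<eta> * cnj \<eta> = 1" and ha: "\<alpha> * (1 + \<eta>) = 1" and hq: "q * (1 + \<eta>) = 1 - cnj \<eta>"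
    and hrel: "(2*lam - 1) * chebU (m-1) lam = 2 * chebU (m-2) lam"
    and hth: "exp (- \<i> * complex_of_real th) = cnj \<eta>"
  shows "eigenvector (H_mat (C_mat m) th) (vec (2*m) (fv m lam \<eta> \<alpha> q)) (complex_of_real lam)"
proof -
  have hrel': "(2*lam - 1) * W lam m = 2 * W lam (m - 1)"
  proof -
    obtain k where k: "m = k + 2" using m by (metis add.commute le_Suc_ex)
    show ?thesis using hrel unfolding W_def k by simp
  qed
  have nz: "vec (2*m) (fv m lam \<eta> \<alpha> q) \<noteq> 0\<^sub>v (2*m)"
  proof
    assume "vec (2*m) (fv m lam \<eta> \<alpha> q) = 0\<^sub>v (2*m)"
    then have "vec (2*m) (fv m lam \<eta> \<alpha> q) $ 0 = 0\<^sub>v (2*m) $ 0" by simp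
    then show False using m by (simp add: fv_def W_def)
  qed
  show ?thesis unfolding eigenvector_def H_dims using nz eig[OF m he ha hq hrel' hth] by simp
qed



theorem mainTheorem18:
  fixes m :: nat and lam :: real
  assumes hm: "m \<ge> 2"
    and root: "P_poly m lam = 0"
    and largest: "\<forall>x. P_poly m x = 0 \<longrightarrow> x \<le> lam"
  defines "U \<equiv> (\<lambda>r. complex_of_real (chebU r lam))"
    and "\<eta> \<equiv> exp (- \<i> * complex_of_real (pi / 4))"
    and "\<alpha> \<equiv> 1 / (1 + exp (- \<i> * complex_of_real (pi / 4)))"
    and "q \<equiv> (1 - cnj (exp (- \<i> * complex_of_real (pi / 4))))
              / (1 + exp (- \<i> * complex_of_real (pi / 4)))"
    and "\<beta> \<equiv> (1 + \<i>) / 2"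
  shows "largest_eigenvalue (H_mat (C_mat m) 0) (complex_of_real lam)
       \<and> largest_eigenvalue (H_mat (C_mat m) (- pi / 4)) (complex_of_real lam)
       \<and> largest_eigenvalue (H_mat (C_mat m) (- pi / 2)) (complex_of_real lam)
       \<and> eigenvector (H_mat (C_mat m) 0)
           (vec1 (2*m) (\<lambda>k. if k \<le> m - 1 then U (k - 1)
                             else if k \<le> m + 1 then U (m - 1) / 2
                             else 0))
           (complex_of_real lam)
       \<and> eigenvector (H_mat (C_mat m) (- pi / 4))
           (vec1 (2*m) (\<lambda>k. if k \<le> m - 1 then \<eta> ^ (k - 1) * U (k - 1)
                             else if k \<le> m + 1 then \<eta> ^ (k - 1) * \<alpha> * U (m - 1)
                             else \<eta> ^ (k - 1) * q * U (2*m - k)))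
           (complex_of_real lam)
       \<and> eigenvector (H_mat (C_mat m) (- pi / 2))
           (vec1 (2*m) (\<lambda>k. if k \<le> m - 1 then (- \<i>) ^ (k - 1) * U (k - 1)
                             else if k \<le> m + 1 then (- \<i>) ^ (k - 1) * \<beta> * U (m - 1)
                             else (- \<i>) ^ (k - 1) * U (2*m - k)))
           (complex_of_real lam)"
proof -
  have lam1: "lam \<ge> 1" by (rule lam_ge1[OF hm largest])
  have hrel: "(2*lam - 1) * chebU (m-1) lam = 2 * chebU (m-2) lam" by (rule hrel_of_root[OF hm root])
  have e0: "eigenvector (H_mat (C_mat m) 0) (vec (2*m) (fv m lam 1 (1/2) 0)) (complex_of_real lam)"
    by (rule eigvec[OF hm _ _ _ hrel]) simp_all
  have v0: "vec1 (2*m) (\<lambda>k. if k \<le> m - 1 then U (k - 1) else if k \<le> m + 1 then U (m - 1) / 2 else 0)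
      = vec (2*m) (fv m lam 1 (1/2) 0)"
    unfolding vec1_def by (rule eq_vecI) (use hm in \<open>auto simp: fv_def W_def U_def\<close>)
  have he4: "\<eta> * cnj \<eta> = 1" unfolding \<eta>_def by (rule w_unit)
  have re4: "Re \<eta> > 0"
  proof -
    have "\<eta> = cis (- (pi/4))" unfolding \<eta>_def using cis_conv_exp[of "- (pi/4)"] by simp
    then have "Re \<eta> = cos (pi/4)" by simp
    then have "Re \<eta> * 2 = sqrt 2" by (simp add: cos_45)
    moreover have "sqrt 2 > (0::real)" by simp
    ultimately show ?thesis by linarith
  qed
  have nz4: "1 + \<eta> \<noteq> 0"
  proof
    assume "1 + \<eta> = 0"
    then have "Re (1 + \<eta>) = 0" by simp
    then show False using re4 by simp
  qed
  have ha4: "\<alpha> * (1 + \<eta>) = 1" unfolding \<alpha>_def \<eta>_def[symmetric] using nz4 by simp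
  have hq4: "q * (1 + \<eta>) = 1 - cnj \<eta>" unfolding q_def \<eta>_def[symmetric] using nz4 by simp
  have hth4: "exp (- \<i> * complex_of_real (- pi / 4)) = cnj \<eta>"
    unfolding \<eta>_def exp_cnj'[symmetric] by simp
  have e4: "eigenvector (H_mat (C_mat m) (- pi / 4)) (vec (2*m) (fv m lam \<eta> \<alpha> q)) (complex_of_real lam)"
    by (rule eigvec[OF hm he4 ha4 hq4 hrel hth4])
  have v4: "vec1 (2*m) (\<lambda>k. if k \<le> m - 1 then \<eta> ^ (k - 1) * U (k - 1)
                             else if k \<le> m + 1 then \<eta> ^ (k - 1) * \<alpha> * U (m - 1)
                             else \<eta> ^ (k - 1) * q * U (2*m - k))
      = vec (2*m) (fv m lam \<eta> \<alpha> q)"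
    unfolding vec1_def by (rule eq_vecI) (use hm in \<open>auto simp: fv_def W_def U_def Suc_diff_Suc\<close>)
  have hth2: "exp (- \<i> * complex_of_real (- pi / 2)) = cnj (- \<i>)"
  proof -
    have "exp (- \<i> * complex_of_real (- pi / 2)) = cis (pi/2)" using cis_conv_exp[of "pi/2"] by simp
    then show ?thesis by simp
  qed
  have e2: "eigenvector (H_mat (C_mat m) (- pi / 2)) (vec (2*m) (fv m lam (- \<i>) \<beta> 1)) (complex_of_real lam)"
    by (rule eigvec[OF hm _ _ _ hrel hth2]) (simp_all add: \<beta>_def field_simps)
  have v2: "vec1 (2*m) (\<lambda>k. if k \<le> m - 1 then (- \<i>) ^ (k - 1) * U (k - 1)
                             else if k \<le> m + 1 then (- \<i>) ^ (k - 1) * \<beta> * U (m - 1)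
                             else (- \<i>) ^ (k - 1) * U (2*m - k))
      = vec (2*m) (fv m lam (- \<i>) \<beta> 1)"
    unfolding vec1_def by (rule eq_vecI) (use hm in \<open>auto simp: fv_def W_def U_def Suc_diff_Suc\<close>)
  have l0: "largest_eigenvalue (H_mat (C_mat m) 0) (complex_of_real lam)"
    using largest_ev[OF hm lam1 hrel] e0 unfolding eigenvalue_def by blast
  have l4: "largest_eigenvalue (H_mat (C_mat m) (- pi / 4)) (complex_of_real lam)"
    using largest_ev[OF hm lam1 hrel] e4 unfolding eigenvalue_def by blast
  have l2: "largest_eigenvalue (H_mat (C_mat m) (- pi / 2)) (complex_of_real lam)"
    using largest_ev[OF hm lam1 hrel] e2 unfolding eigenvalue_def by blast
  show ?thesis using l0 l4 l2 e0 e4 e2 unfolding v0 v4 v2 by blast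
qed

end
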